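(* Let $\omega\in\Omega_+$. If $0$ is $\omega$-transient, then $P_{0,\omega}[X_n>0\text{ for all } n>0]>0$.
   Context: Cookie environments: $\Omega_+=([1/2,1]^{\mathbb N})^{\mathbb Z}$. $P_{x,\omega}$ is the law of the nearest-neighbor process $(X_n)_{n\ge0}$ with $X_0=x$ which, on its $i$-th visit to site $z$, jumps to $z+1$ with probability $\omega(z,i)$ and to $z-1$ otherwise. $R_k=\{X_n=k\text{ i.o.}\}$; a site $y$ is $\omega$-transient if $P_{x,\omega}[R_y]=0$ for all $x\in\mathbb Z$. *)

theory Defs
  imports "HOL-Probability.Probability"
begin

text \<open>Cookie random walk, realised via independent coins (cookie stacks):
  coin (z,i) ~ Bernoulli(omega z i) decides the jump on the i-th visit to z
  (visits counted from 1).\<close>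

fun cookie_hist :: "int \<Rightarrow> (int \<times> nat \<Rightarrow> bool) \<Rightarrow> nat \<Rightarrow> int list" where
  "cookie_hist x \<xi> 0 = [x]"
| "cookie_hist x \<xi> (Suc n) =
     (let h = cookie_hist x \<xi> n; y = last h; k = count_list h y
      in h @ [if \<xi> (y, k) then y + 1 else y - 1])"

definition cookie_walk :: "int \<Rightarrow> (int \<times> nat \<Rightarrow> bool) \<Rightarrow> nat \<Rightarrow> int" where
  "cookie_walk x \<xi> n = last (cookie_hist x \<xi> n)"

definition coin_space :: "(int \<Rightarrow> nat \<Rightarrow> real) \<Rightarrow> (int \<times> nat \<Rightarrow> bool) measure" where
  "coin_space \<omega> = PiM UNIV (\<lambda>zi. measure_pmf (bernoulli_pmf (\<omega> (fst zi) (snd zi))))"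

definition cookie_law :: "(int \<Rightarrow> nat \<Rightarrow> real) \<Rightarrow> int \<Rightarrow> (nat \<Rightarrow> int) measure" where
  "cookie_law \<omega> x = distr (coin_space \<omega>) (PiM UNIV (\<lambda>_. count_space UNIV))
                        (\<lambda>\<xi> n. cookie_walk x \<xi> n)"

definition cookie_env_plus :: "(int \<Rightarrow> nat \<Rightarrow> real) \<Rightarrow> bool" where
  "cookie_env_plus \<omega> \<longleftrightarrow> (\<forall>z i. 1 \<le> i \<longrightarrow> 1/2 \<le> \<omega> z i \<and> \<omega> z i \<le> 1)"

definition R_event :: "int \<Rightarrow> (nat \<Rightarrow> int) set" where
  "R_event k = {X. infinite {n. X n = k}}"

definition omega_transient :: "(int \<Rightarrow> nat \<Rightarrow> real) \<Rightarrow> int \<Rightarrow> bool" where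
  "omega_transient \<omega> y \<longleftrightarrow> (\<forall>x. measure (cookie_law \<omega> x) (R_event y) = 0)"

end

theory Submission imports Defs begin

lemma hist_Suc: "cookie_hist x \<xi> (Suc n) = cookie_hist x \<xi> n @ [cookie_walk x \<xi> (Suc n)]"
  by (simp add: cookie_walk_def Let_def)

declare cookie_hist.simps(2)[simp del]

lemma walk_0[simp]: "cookie_walk x \<xi> 0 = x"
  by (simp add: cookie_walk_def)

lemma walk_Suc: "cookie_walk x \<xi> (Suc n) =
   (if \<xi> (cookie_walk x \<xi> n, count_list (cookie_hist x \<xi> n) (cookie_walk x \<xi> n))
    then cookie_walk x \<xi> n + 1 else cookie_walk x \<xi> n - 1)"
  by (simp add: cookie_walk_def Let_def cookie_hist.simps(2))

lemma hist_map: "cookie_hist x \<xi> n = map (cookie_walk x \<xi>) [0..<Suc n]"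
  by (induction n) (simp_all add: hist_Suc)

lemma walk_step: "\<bar>cookie_walk x \<xi> (Suc n) - cookie_walk x \<xi> n\<bar> = 1"
  by (simp add: walk_Suc)

lemma cnt_Suc: "count_list (cookie_hist x \<xi> (Suc n)) z =
   count_list (cookie_hist x \<xi> n) z + (if cookie_walk x \<xi> (Suc n) = z then 1 else 0)"
  by (simp add: hist_Suc)

lemma cnt_pos: "count_list (cookie_hist x \<xi> n) (cookie_walk x \<xi> n) \<ge> 1"
  by (cases n) (simp_all add: hist_Suc)

lemma cnt_mono: "m \<le> n \<Longrightarrow> count_list (cookie_hist x \<xi> m) z \<le> count_list (cookie_hist x \<xi> n) z"
  by (induction n rule: dec_induct) (auto simp: cnt_Suc)

definition Mc :: "(int \<Rightarrow> nat \<Rightarrow> real) \<Rightarrow> int \<times> nat \<Rightarrow> bool measure" where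
  "Mc \<omega> c = measure_pmf (bernoulli_pmf (\<omega> (fst c) (snd c)))"

lemma coin_space_Mc: "coin_space \<omega> = PiM UNIV (Mc \<omega>)"
  unfolding coin_space_def Mc_def[abs_def] ..

lemma space_coin[simp]: "space (coin_space \<omega>) = UNIV"
  by (simp add: coin_space_def space_PiM)

lemma sets_Mc[simp]: "sets (Mc \<omega> c) = UNIV"
  by (simp add: Mc_def)

lemma space_Mc[simp]: "space (Mc \<omega> c) = UNIV"
  by (simp add: Mc_def)

lemma space_PiM_Mc[simp]: "space (PiM UNIV (Mc \<omega>)) = UNIV"
  by (simp add: space_PiM)

lemma prob_Mc: "prob_space (Mc \<omega> c)"
  by (simp add: Mc_def prob_space_measure_pmf)

lemma pps: "product_prob_space (Mc \<omega>)"
  by (rule product_prob_spaceI) (rule prob_Mc)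

lemma coin_prob: "prob_space (coin_space \<omega>)"
  unfolding coin_space_Mc by (rule prob_space_PiM) (rule prob_Mc)

lemma meas_coord[measurable]: "(\<lambda>\<xi>. \<xi> c) \<in> measurable (coin_space \<omega>) (count_space UNIV)"
proof -
  have "(\<lambda>\<xi>. \<xi> c) \<in> measurable (coin_space \<omega>) (Mc \<omega> c)"
    unfolding coin_space_Mc by (rule measurable_component_singleton) simp
  moreover have "measurable (coin_space \<omega>) (Mc \<omega> c) = measurable (coin_space \<omega>) (count_space UNIV)"
    by (rule measurable_cong_sets) simp_all
  ultimately show ?thesis by simp
qed

lemma meas_hist[measurable]: "(\<lambda>\<xi>. cookie_hist x \<xi> n) \<in> measurable (coin_space \<omega>) (count_space UNIV)"
proof (induction n)
  case 0 show ?case by simp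
next
  case (Suc n)
  let ?f = "\<lambda>h \<xi>. h @ [if \<xi> (last h, count_list h (last h)) then last h + 1 else last h - 1]"
  have eq: "(\<lambda>\<xi>. cookie_hist x \<xi> (Suc n)) = (\<lambda>\<xi>. ?f (cookie_hist x \<xi> n) \<xi>)"
    by (simp add: Let_def fun_eq_iff cookie_hist.simps(2))
  have m1: "\<And>h. (\<lambda>\<xi>. ?f h \<xi>) \<in> measurable (coin_space \<omega>) (count_space UNIV)"
    by measurable
  have "(\<lambda>\<xi>. ?f (cookie_hist x \<xi> n) \<xi>) \<in> measurable (coin_space \<omega>) (count_space UNIV)"
    by (rule measurable_compose_countable'[OF m1 Suc]) simp
  then show ?case by (simp only: eq)
qed

lemma meas_walk[measurable]: "(\<lambda>\<xi>. cookie_walk x \<xi> n) \<in> measurable (coin_space \<omega>) (count_space UNIV)"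
  unfolding cookie_walk_def by measurable

lemma meas_path: "(\<lambda>\<xi> n. cookie_walk x \<xi> n) \<in> measurable (coin_space \<omega>) (PiM UNIV (\<lambda>_. count_space UNIV))"
  by (rule measurable_PiM_single') (auto simp: space_PiM)

lemma law_eq:
  assumes "A \<in> sets (PiM UNIV (\<lambda>_::nat. count_space (UNIV::int set)))"
  shows "measure (cookie_law \<omega> x) A = measure (coin_space \<omega>) {\<xi>. (\<lambda>n. cookie_walk x \<xi> n) \<in> A}"
  unfolding cookie_law_def using assms meas_path
  by (subst measure_distr) (auto simp: vimage_def)

lemma cyl_eq: "prod_emb UNIV (Mc \<omega>) J (PiE J F) = {\<xi>. \<forall>j\<in>J. \<xi> j \<in> F j}"
  by (auto simp: prod_emb_def PiE_iff)

lemma emeasure_cyl: "finite J \<Longrightarrow>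
  emeasure (coin_space \<omega>) {\<xi>. \<forall>j\<in>J. \<xi> j \<in> F j} = (\<Prod>j\<in>J. emeasure (Mc \<omega> j) (F j))"
  using product_prob_space.emeasure_PiM_Collect[OF pps, of J UNIV F \<omega>] by (simp add: coin_space_Mc)

lemma sets_cyl[measurable]: "{\<xi>. \<forall>j\<in>J. \<xi> j \<in> F j} \<in> sets (coin_space \<omega>)" if "finite J"
proof -
  have "{\<xi>. \<forall>j\<in>J. \<xi> j \<in> F j} = prod_emb UNIV (Mc \<omega>) J (PiE J F)" by (rule cyl_eq[symmetric])
  also have "\<dots> \<in> sets (PiM UNIV (Mc \<omega>))"
    using that by (intro sets_PiM_I) auto
  finally show ?thesis by (simp add: coin_space_Mc)
qed

definition mix :: "'a set \<Rightarrow> ('a \<Rightarrow> bool) \<times> ('a \<Rightarrow> bool) \<Rightarrow> 'a \<Rightarrow> bool" where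
  "mix S p = (\<lambda>c. if c \<in> S then snd p c else fst p c)"

lemma meas_mix: "mix S \<in> measurable (coin_space \<omega> \<Otimes>\<^sub>M coin_space \<omega>) (coin_space \<omega>)"
proof -
  have "(\<lambda>p. mix S p c) \<in> measurable (coin_space \<omega> \<Otimes>\<^sub>M coin_space \<omega>) (Mc \<omega> c)" for c
  proof (cases "c \<in> S")
    case True
    have "(\<lambda>p. snd p c) \<in> measurable (coin_space \<omega> \<Otimes>\<^sub>M coin_space \<omega>) (Mc \<omega> c)"
      unfolding coin_space_Mc by (rule measurable_compose[OF measurable_snd measurable_component_singleton]) simp
    then show ?thesis using True by (simp add: mix_def)
  next
    case False
    have "(\<lambda>p. fst p c) \<in> measurable (coin_space \<omega> \<Otimes>\<^sub>M coin_space \<omega>) (Mc \<omega> c)"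
      unfolding coin_space_Mc by (rule measurable_compose[OF measurable_fst measurable_component_singleton]) simp
    then show ?thesis using False by (simp add: mix_def)
  qed
  then show ?thesis
    unfolding coin_space_Mc[of \<omega>]
    by (intro measurable_PiM_single') (auto simp: space_PiM)
qed

lemma distr_mix: "distr (coin_space \<omega> \<Otimes>\<^sub>M coin_space \<omega>) (coin_space \<omega>) (mix S) = coin_space \<omega>"
proof -
  interpret P: prob_space "coin_space \<omega>" by (rule coin_prob)
  interpret PP: pair_prob_space "coin_space \<omega>" "coin_space \<omega>" by unfold_locales
  have "distr (coin_space \<omega> \<Otimes>\<^sub>M coin_space \<omega>) (PiM UNIV (Mc \<omega>)) (mix S) = PiM UNIV (Mc \<omega>)"
  proof (rule product_prob_space.PiM_eq[OF pps])
    show "sets (distr (coin_space \<omega> \<Otimes>\<^sub>M coin_space \<omega>) (PiM UNIV (Mc \<omega>)) (mix S)) = sets (PiM UNIV (Mc \<omega>))"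
      by simp
    fix J :: "(int \<times> nat) set" and F assume J: "finite J" "J \<subseteq> UNIV" "\<And>j. j\<in>J \<Longrightarrow> F j \<in> sets (Mc \<omega> j)"
    have pre: "mix S -` prod_emb UNIV (Mc \<omega>) J (PiE J F) \<inter> space (coin_space \<omega> \<Otimes>\<^sub>M coin_space \<omega>)
       = {\<xi>. \<forall>j\<in>J-S. \<xi> j \<in> F j} \<times> {\<xi>. \<forall>j\<in>J\<inter>S. \<xi> j \<in> F j}"
      unfolding cyl_eq by (auto simp: mix_def space_pair_measure)
    have "emeasure (distr (coin_space \<omega> \<Otimes>\<^sub>M coin_space \<omega>) (PiM UNIV (Mc \<omega>)) (mix S)) (prod_emb UNIV (Mc \<omega>) J (PiE J F))
       = emeasure (coin_space \<omega> \<Otimes>\<^sub>M coin_space \<omega>) (mix S -` prod_emb UNIV (Mc \<omega>) J (PiE J F) \<inter> space (coin_space \<omega> \<Otimes>\<^sub>M coin_space \<omega>))"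
      using meas_mix[of S \<omega>] J
      by (subst emeasure_distr) (auto simp: coin_space_Mc intro!: sets_PiM_I)
    also have "\<dots> = emeasure (coin_space \<omega>) {\<xi>. \<forall>j\<in>J-S. \<xi> j \<in> F j} * emeasure (coin_space \<omega>) {\<xi>. \<forall>j\<in>J\<inter>S. \<xi> j \<in> F j}"
      unfolding pre using J by (intro P.emeasure_pair_measure_Times) auto
    also have "\<dots> = (\<Prod>j\<in>J-S. emeasure (Mc \<omega> j) (F j)) * (\<Prod>j\<in>J\<inter>S. emeasure (Mc \<omega> j) (F j))"
      using J by (simp add: emeasure_cyl)
    also have "\<dots> = (\<Prod>j\<in>J. emeasure (Mc \<omega> j) (F j))"
    proof -
      have "J = (J - S) \<union> (J \<inter> S)" by auto
      then show ?thesis using J(1) by (subst (3) \<open>J = _\<close>, subst prod.union_disjoint) auto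
    qed
    finally show "emeasure (distr (coin_space \<omega> \<Otimes>\<^sub>M coin_space \<omega>) (PiM UNIV (Mc \<omega>)) (mix S)) (prod_emb UNIV (Mc \<omega>) J (PiE J F)) = (\<Prod>j\<in>J. emeasure (Mc \<omega> j) (F j))" .
  qed
  then show ?thesis by (simp add: coin_space_Mc[symmetric])
qed

lemma split_indep:
  assumes E: "E \<in> sets (coin_space \<omega>)" and F: "F \<in> sets (coin_space \<omega>)"
    and invE: "\<And>\<xi> \<eta>. (\<forall>c. c \<notin> S \<longrightarrow> \<xi> c = \<eta> c) \<Longrightarrow> \<xi> \<in> E \<Longrightarrow> \<eta> \<in> E"
    and invF: "\<And>\<xi> \<eta>. (\<forall>c. c \<in> S \<longrightarrow> \<xi> c = \<eta> c) \<Longrightarrow> \<xi> \<in> F \<Longrightarrow> \<eta> \<in> F"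
  shows "measure (coin_space \<omega>) (E \<inter> F) = measure (coin_space \<omega>) E * measure (coin_space \<omega>) F"
proof -
  interpret P: prob_space "coin_space \<omega>" by (rule coin_prob)
  interpret PP: pair_prob_space "coin_space \<omega>" "coin_space \<omega>" by unfold_locales
  have m1: "mix S (a,b) \<in> E \<longleftrightarrow> a \<in> E" for a b
  proof
    assume "mix S (a,b) \<in> E" then show "a \<in> E" by (rule invE[rotated]) (simp add: mix_def)
  next
    assume "a \<in> E" then show "mix S (a,b) \<in> E" by (rule invE[rotated]) (simp add: mix_def)
  qed
  have m2: "mix S (a,b) \<in> F \<longleftrightarrow> b \<in> F" for a b
  proof
    assume "mix S (a,b) \<in> F" then show "b \<in> F" by (rule invF[rotated]) (simp add: mix_def)
  next
    assume "b \<in> F" then show "mix S (a,b) \<in> F" by (rule invF[rotated]) (simp add: mix_def)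
  qed
  have pre: "mix S -` (E \<inter> F) \<inter> space (coin_space \<omega> \<Otimes>\<^sub>M coin_space \<omega>) = E \<times> F"
    by (auto simp: m1 m2 space_pair_measure)
  have "measure (coin_space \<omega>) (E \<inter> F) = measure (distr (coin_space \<omega> \<Otimes>\<^sub>M coin_space \<omega>) (coin_space \<omega>) (mix S)) (E \<inter> F)"
    by (simp add: distr_mix)
  also have "\<dots> = measure (coin_space \<omega> \<Otimes>\<^sub>M coin_space \<omega>) (E \<times> F)"
    using meas_mix[of S \<omega>] E F by (subst measure_distr) (auto simp: pre[symmetric] simp del: vimage_Int)
  also have "\<dots> = measure (coin_space \<omega>) E * measure (coin_space \<omega>) F"
    using E F unfolding measure_def by (simp add: P.emeasure_pair_measure_Times enn2real_mult)
  finally show ?thesis .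
qed

definition setT :: "(int \<times> nat) set \<Rightarrow> (int \<times> nat \<Rightarrow> bool) \<Rightarrow> int \<times> nat \<Rightarrow> bool" where
  "setT S \<xi> = (\<lambda>c. if c \<in> S then True else \<xi> c)"

definition SN :: "nat \<Rightarrow> (int \<times> nat) set" where
  "SN N = insert (0,1) ({1} \<times> {1..N})"

lemma walk_le_Suc: "cookie_walk x \<xi> (Suc n) \<le> cookie_walk x \<xi> n + 1"
  and walk_ge_Suc: "cookie_walk x \<xi> (Suc n) \<ge> cookie_walk x \<xi> n - 1"
  by (simp_all add: walk_Suc)

context
  fixes \<xi> :: "int \<times> nat \<Rightarrow> bool" and t :: nat
  assumes ht0: "cookie_walk 0 \<xi> t = 0" and htpos: "\<And>n. n > t \<Longrightarrow> cookie_walk 0 \<xi> n > 0"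
begin

abbreviation "Wk n \<equiv> cookie_walk 0 \<xi> n"
abbreviation "ck n z \<equiv> count_list (cookie_hist 0 \<xi> n) z"
abbreviation "NN \<equiv> ck (Suc t) 1"
abbreviation "\<xi>' \<equiv> setT (SN NN) \<xi>"
abbreviation "Wk' n \<equiv> cookie_walk 0 \<xi>' n"
abbreviation "ck' n z \<equiv> count_list (cookie_hist 0 \<xi>' n) z"

lemma F1: "Wk (Suc t) = 1" "Wk (Suc (Suc t)) = 2"
proof -
  have a: "Wk (Suc t) > 0" "Wk (Suc (Suc t)) > 0" using htpos by auto
  show "Wk (Suc t) = 1" using a(1) walk_le_Suc[of 0 \<xi> t] ht0 by simp
  then show "Wk (Suc (Suc t)) = 2" using a(2) walk_step[of 0 \<xi> "Suc t"] by auto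
qed

lemma F2: "NN < k \<Longrightarrow> k \<le> ck n 1 \<Longrightarrow> \<xi> (1,k)"
proof (induction n arbitrary: k)
  case 0
  then show ?case by (simp add: cnt_mono)
next
  case (Suc n)
  show ?case
  proof (cases "k \<le> ck n 1")
    case True then show ?thesis using Suc by blast
  next
    case False
    then have w: "Wk (Suc n) = 1" and k: "k = ck (Suc n) 1"
      using Suc.prems by (auto simp: cnt_Suc split: if_splits)
    have "Suc n > Suc t"
    proof (rule ccontr)
      assume "\<not> Suc n > Suc t"
      then have "ck (Suc n) 1 \<le> NN" by (intro cnt_mono) simp
      then show False using Suc.prems k by simp
    qed
    then have "Wk (Suc (Suc n)) > 0" using htpos by simp
    then show ?thesis using w k by (simp add: walk_Suc[of 0 \<xi> "Suc n"] split: if_splits)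
  qed
qed

lemma F3: assumes "Wk n = 1"
  shows "\<exists>m\<ge>n. Wk m = 1 \<and> Wk (Suc m) = 2 \<and> (\<forall>r. n \<le> r \<and> r \<le> m \<longrightarrow> Wk r \<le> 1)"
proof -
  have ex: "\<exists>m. m \<ge> n \<and> Wk m = 1 \<and> Wk (Suc m) = 2"
  proof (cases "n > t")
    case True
    then have "Wk (Suc n) > 0" using htpos by simp
    then have "Wk (Suc n) = 2" using assms walk_step[of 0 \<xi> n] by auto
    then show ?thesis using assms by auto
  next
    case False
    then show ?thesis using F1 by (intro exI[of _ "Suc t"]) auto
  qed
  define m where "m = (LEAST m. m \<ge> n \<and> Wk m = 1 \<and> Wk (Suc m) = 2)"
  have m: "m \<ge> n" "Wk m = 1" "Wk (Suc m) = 2"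
    using LeastI_ex[OF ex] unfolding m_def by auto
  have mn: "\<not> (Wk r = 1 \<and> Wk (Suc r) = 2)" if "n \<le> r" "r < m" for r
    using not_less_Least[of r "\<lambda>m. m \<ge> n \<and> Wk m = 1 \<and> Wk (Suc m) = 2"] that unfolding m_def by auto
  have "Wk r \<le> 1" if "n \<le> r" "r \<le> m" for r
    using that
  proof (induction r rule: dec_induct)
    case base then show ?case using assms by simp
  next
    case (step r)
    show ?case
    proof (cases "Wk r = 1")
      case True
      then have "Wk (Suc r) \<noteq> 2" using mn[of r] step by auto
      then show ?thesis using True walk_step[of 0 \<xi> r] by auto
    next
      case False
      then show ?thesis using step walk_le_Suc[of 0 \<xi> r] by auto
    qed
  qed
  then show ?thesis using m by blast
qed

lemma cnt_const: assumes "\<forall>r. n < r \<and> r \<le> m \<longrightarrow> Wk r \<le> 1" "z \<ge> 2" "n \<le> m"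
  shows "ck m z = ck n z"
  using assms(3,1)
proof (induction m rule: dec_induct)
  case base then show ?case by simp
next
  case (step k)
  have w: "Wk (Suc k) \<le> 1" using step.prems step.hyps by auto
  have "ck k z = ck n z" using step.IH step.prems by auto
  then show ?case using w assms(2) by (simp add: cnt_Suc)
qed

definition Rel :: "nat \<Rightarrow> nat \<Rightarrow> bool" where
  "Rel n' n \<longleftrightarrow> Wk' n' = Wk n \<and> Wk n \<ge> 1 \<and> (\<forall>z\<ge>2. ck' n' z = ck n z) \<and> ck' n' 1 \<le> ck n 1"

lemma coin'_1: assumes "1 \<le> k" "k \<le> ck n 1" shows "\<xi>' (1,k)"
proof (cases "k \<le> NN")
  case True then show ?thesis using assms by (simp add: setT_def SN_def)
next
  case False then show ?thesis using F2[of k n] assms by (simp add: setT_def)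
qed

lemma Rel_step: assumes "Rel n' n" shows "\<exists>n''. Rel (Suc n') n''"
proof (cases "Wk n \<ge> 2")
  case True
  have nS: "(Wk n, c) \<notin> SN NN" for c using True by (auto simp: SN_def)
  have cn: "ck' n' (Wk n) = ck n (Wk n)" using assms True by (simp add: Rel_def)
  have "\<xi>' (Wk' n', ck' n' (Wk' n')) = \<xi> (Wk n, ck n (Wk n))"
    using assms cn nS by (simp add: Rel_def setT_def)
  then have e: "Wk' (Suc n') = Wk (Suc n)"
    using assms by (simp add: walk_Suc[of 0 _ n'] walk_Suc[of 0 _ n] Rel_def)
  have "Wk (Suc n) \<ge> 1" using True walk_ge_Suc[of 0 \<xi> n] by simp
  then have "Rel (Suc n') (Suc n)" using assms e by (auto simp: Rel_def cnt_Suc)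
  then show ?thesis by blast
next
  case False
  then have w1: "Wk n = 1" using assms by (simp add: Rel_def)
  have w1': "Wk' n' = 1" using assms w1 by (simp add: Rel_def)
  have "\<xi>' (1, ck' n' 1)"
    using coin'_1[of "ck' n' 1" n] cnt_pos[of 0 \<xi>' n'] assms w1' by (simp add: Rel_def)
  then have e: "Wk' (Suc n') = 2" using w1' by (simp add: walk_Suc[of 0 _ n'])
  obtain m where m: "m \<ge> n" "Wk m = 1" "Wk (Suc m) = 2" "\<forall>r. n \<le> r \<and> r \<le> m \<longrightarrow> Wk r \<le> 1"
    using F3[OF w1] by blast
  have c2: "ck (Suc m) z = ck' (Suc n') z" if "z \<ge> 2" for z
  proof -
    have "ck m z = ck n z" using cnt_const[of n m z] m that by auto
    then show ?thesis using assms that m(3) e by (auto simp: cnt_Suc Rel_def)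
  qed
  have c1: "ck' (Suc n') 1 \<le> ck (Suc m) 1"
  proof -
    have "ck n 1 \<le> ck (Suc m) 1" using m(1) by (intro cnt_mono) simp
    then show ?thesis using assms e by (auto simp: cnt_Suc Rel_def)
  qed
  have "Rel (Suc n') (Suc m)" using e m(3) c1 c2 by (auto simp: Rel_def)
  then show ?thesis by blast
qed

lemma Rel_init: "\<exists>n. Rel 1 n"
proof -
  have ex: "\<exists>n. Wk n = 1" using F1 by blast
  define n0 where "n0 = (LEAST n. Wk n = 1)"
  have n0: "Wk n0 = 1" using LeastI_ex[OF ex] unfolding n0_def .
  have below: "Wk k \<le> 0" if "k < n0" for k
    using that
  proof (induction k)
    case 0 then show ?case by simp
  next
    case (Suc k)
    have "Wk (Suc k) \<noteq> 1" using not_less_Least[of "Suc k" "\<lambda>n. Wk n = 1"] Suc.prems unfolding n0_def by auto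
    moreover have "Wk (Suc k) \<le> 1" using Suc walk_le_Suc[of 0 \<xi> k] by simp
    ultimately show ?case by simp
  qed
  have cz: "ck n0 z = 0" if "z \<ge> 2" for z
  proof -
    have "z \<notin> set (cookie_hist 0 \<xi> n0)"
    proof
      assume "z \<in> set (cookie_hist 0 \<xi> n0)"
      then obtain k where "k < Suc n0" "Wk k = z" by (auto simp: hist_map simp del: upt_Suc)
      then show False using below[of k] n0 that by (cases "k = n0") (auto simp: less_Suc_eq)
    qed
    then show ?thesis by simp
  qed
  have w'1: "Wk' 1 = 1"
    by (simp add: walk_Suc[of 0 _ 0] setT_def SN_def cookie_hist.simps)
  have h'1: "cookie_hist 0 \<xi>' 1 = [0, 1]"
    using w'1 hist_Suc[of 0 \<xi>' 0] by simp
  have "ck n0 1 \<ge> 1" using cnt_pos[of 0 \<xi> n0] n0 by simp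
  then have "Rel 1 n0" using w'1 n0 h'1 cz by (auto simp: Rel_def)
  then show ?thesis by blast
qed

lemma Rel_all: "n' \<ge> 1 \<Longrightarrow> \<exists>n. Rel n' n"
proof (induction n' rule: dec_induct)
  case base then show ?case using Rel_init by simp
next
  case (step n') then show ?case using Rel_step by blast
qed

lemma sim_main: "\<forall>n>0. cookie_walk 0 (setT (SN NN) \<xi>) n > 0"
proof (intro allI impI)
  fix n :: nat assume "n > 0"
  then obtain m where "Rel n m" using Rel_all[of n] by auto
  then show "Wk' n > 0" by (simp add: Rel_def)
qed

end


lemma cnt_unbounded: assumes "infinite {n. cookie_walk x \<xi> n = z}"
  shows "\<exists>n. count_list (cookie_hist x \<xi> n) z \<ge> i"
proof (induction i)
  case 0 then show ?case by simp
next
  case (Suc i)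
  then obtain n where n: "count_list (cookie_hist x \<xi> n) z \<ge> i" by blast
  obtain m where m: "m > n" "cookie_walk x \<xi> m = z"
    using assms unfolding infinite_nat_iff_unbounded by auto
  then obtain m' where m': "m = Suc m'" "m' \<ge> n" by (cases m) auto
  have "count_list (cookie_hist x \<xi> m') z \<ge> count_list (cookie_hist x \<xi> n) z"
    using m' by (intro cnt_mono)
  then have "count_list (cookie_hist x \<xi> m) z \<ge> Suc i"
    using n m m' by (simp add: cnt_Suc)
  then show ?case by blast
qed

lemma cnt_exact: assumes "count_list (cookie_hist x \<xi> n) z \<ge> i" "i \<ge> 1"
  shows "\<exists>m. cookie_walk x \<xi> m = z \<and> count_list (cookie_hist x \<xi> m) z = i"
  using assms(1)
proof (induction n)
  case 0
  have h0: "cookie_hist x \<xi> 0 = [x]" by simp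
  show ?case
  proof (cases "x = z")
    case True then show ?thesis using 0 assms(2) by (intro exI[of _ 0]) (simp only: h0, simp)
  next
    case False then show ?thesis using 0 assms(2) by (simp only: h0, simp)
  qed
next
  case (Suc n)
  show ?case
  proof (cases "count_list (cookie_hist x \<xi> n) z \<ge> i")
    case True then show ?thesis using Suc.IH by blast
  next
    case False
    then have "cookie_walk x \<xi> (Suc n) = z \<and> count_list (cookie_hist x \<xi> (Suc n)) z = i"
      using Suc.prems unfolding cnt_Suc[of x \<xi> n z] by (cases "cookie_walk x \<xi> (Suc n) = z") simp_all
    then show ?thesis by blast
  qed
qed

lemma up_inf: assumes inf: "infinite {n. cookie_walk x \<xi> n = z}" and G: "\<forall>i0. \<exists>i\<ge>i0. \<xi> (z,i)"
  shows "infinite {n. cookie_walk x \<xi> n = z + 1}"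
proof
  assume fin: "finite {n. cookie_walk x \<xi> n = z + 1}"
  then obtain N0 where N0: "\<And>n. cookie_walk x \<xi> n = z + 1 \<Longrightarrow> n < N0"
    using fin unfolding finite_nat_set_iff_bounded by auto
  obtain i where i: "i \<ge> Suc (count_list (cookie_hist x \<xi> N0) z)" "\<xi> (z,i)" using G by blast
  obtain n where "count_list (cookie_hist x \<xi> n) z \<ge> i" using cnt_unbounded[OF inf] by blast
  then obtain m where m: "cookie_walk x \<xi> m = z" "count_list (cookie_hist x \<xi> m) z = i"
    using cnt_exact[where x=x and \<xi>=\<xi> and n=n and z=z and i=i] i by auto
  have "m > N0"
  proof (rule ccontr)
    assume "\<not> m > N0"
    then have "count_list (cookie_hist x \<xi> m) z \<le> count_list (cookie_hist x \<xi> N0) z" by (intro cnt_mono) simp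
    then show False using m i by simp
  qed
  moreover have "cookie_walk x \<xi> (Suc m) = z + 1" using m i by (simp add: walk_Suc)
  ultimately show False using N0[of "Suc m"] by simp
qed

lemma up_to_zero: assumes "infinite {n. cookie_walk x \<xi> n = - int k}" and G: "\<forall>z i0. \<exists>i\<ge>i0. \<xi> (z,i)"
  shows "infinite {n. cookie_walk x \<xi> n = 0}"
  using assms(1)
proof (induction k)
  case 0 then show ?case by simp
next
  case (Suc k)
  have "infinite {n. cookie_walk x \<xi> n = - int (Suc k) + 1}" using up_inf[OF Suc.prems] G by blast
  then show ?case using Suc.IH by simp
qed

lemma last_zero: assumes "finite {n. cookie_walk 0 \<xi> n = 0}"
  shows "\<exists>t. cookie_walk 0 \<xi> t = 0 \<and> ((\<forall>n>t. cookie_walk 0 \<xi> n > 0) \<or> (\<forall>n>t. cookie_walk 0 \<xi> n < 0))"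
proof -
  define t where "t = Max {n. cookie_walk 0 \<xi> n = 0}"
  have ne: "{n. cookie_walk 0 \<xi> n = 0} \<noteq> {}" by (auto intro!: exI[of _ 0])
  have t: "cookie_walk 0 \<xi> t = 0" using Max_in[OF assms ne] unfolding t_def by force
  have nz: "cookie_walk 0 \<xi> n \<noteq> 0" if "n > t" for n
    using Max_ge[OF assms, of n] that unfolding t_def by force
  have s: "\<bar>cookie_walk 0 \<xi> (Suc t)\<bar> = 1" using walk_step[of 0 \<xi> t] t by simp
  show ?thesis
  proof (cases "cookie_walk 0 \<xi> (Suc t) = 1")
    case True
    have "cookie_walk 0 \<xi> n > 0" if "Suc t \<le> n" for n
      using that
    proof (induction n rule: dec_induct)
      case base then show ?case using True by simp
    next
      case (step n)
      then show ?case using walk_ge_Suc[of 0 \<xi> n] nz[of "Suc n"] by simp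
    qed
    then show ?thesis using t by (auto simp: Suc_le_eq)
  next
    case False
    then have F: "cookie_walk 0 \<xi> (Suc t) = -1" using s by auto
    have "cookie_walk 0 \<xi> n < 0" if "Suc t \<le> n" for n
      using that
    proof (induction n rule: dec_induct)
      case base then show ?case using F by simp
    next
      case (step n)
      then show ?case using walk_le_Suc[of 0 \<xi> n] nz[of "Suc n"] by simp
    qed
    then show ?thesis using t by (auto simp: Suc_le_eq)
  qed
qed

lemma to_minus_inf: assumes neg: "\<forall>n>t. cookie_walk x \<xi> n < 0" and fin: "\<forall>z\<le>0. finite {n. cookie_walk x \<xi> n = z}"
  shows "\<exists>N. \<forall>m\<ge>N. cookie_walk x \<xi> m \<le> - K"
proof -
  have "finite (\<Union>z\<in>{-K..0}. {n. cookie_walk x \<xi> n = z})"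
    by (rule finite_UN_I) (simp, use fin in simp)
  then obtain N1 where N1: "\<And>n. n \<in> (\<Union>z\<in>{-K..0}. {n. cookie_walk x \<xi> n = z}) \<Longrightarrow> n < N1"
    unfolding finite_nat_set_iff_bounded by blast
  have "cookie_walk x \<xi> m \<le> - K" if "m \<ge> max N1 (Suc t)" for m
  proof -
    have "cookie_walk x \<xi> m < 0" using neg that by auto
    moreover have "cookie_walk x \<xi> m \<notin> {-K..0}"
    proof
      assume "cookie_walk x \<xi> m \<in> {-K..0}"
      then have "m < N1" using N1[of m] by blast
      then show False using that by simp
    qed
    ultimately show ?thesis by simp
  qed
  then show ?thesis by blast
qed



lemma hist_dep:
  assumes "\<And>k. k < n \<Longrightarrow> \<eta> (cookie_walk x \<xi> k, count_list (cookie_hist x \<xi> k) (cookie_walk x \<xi> k))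
                         = \<xi> (cookie_walk x \<xi> k, count_list (cookie_hist x \<xi> k) (cookie_walk x \<xi> k))"
  shows "cookie_hist x \<eta> n = cookie_hist x \<xi> n"
  using assms
proof (induction n)
  case 0 then show ?case by simp
next
  case (Suc n)
  then have IH: "cookie_hist x \<eta> n = cookie_hist x \<xi> n" by simp
  then have w: "cookie_walk x \<eta> n = cookie_walk x \<xi> n" by (simp add: cookie_walk_def)
  have "cookie_walk x \<eta> (Suc n) = cookie_walk x \<xi> (Suc n)"
    using Suc.prems[of n] IH w by (simp add: walk_Suc)
  then show ?case using IH by (simp add: hist_Suc)
qed

lemma cnt_strict: assumes "k < n" shows "count_list (cookie_hist x \<xi> k) (cookie_walk x \<xi> n) < count_list (cookie_hist x \<xi> n) (cookie_walk x \<xi> n)"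
proof -
  obtain n' where n': "n = Suc n'" "k \<le> n'" using assms by (cases n) auto
  have "count_list (cookie_hist x \<xi> k) (cookie_walk x \<xi> n) \<le> count_list (cookie_hist x \<xi> n') (cookie_walk x \<xi> n)"
    using n' by (intro cnt_mono)
  then show ?thesis using n' by (simp add: cnt_Suc)
qed

definition ch :: "int list \<Rightarrow> int \<times> nat" where
  "ch h = (last h, count_list h (last h))"

lemma ch_hist: "ch (cookie_hist x \<xi> n) = (cookie_walk x \<xi> n, count_list (cookie_hist x \<xi> n) (cookie_walk x \<xi> n))"
  by (simp add: ch_def cookie_walk_def)

lemma E_inv: assumes "\<forall>c. c \<notin> {ch h} \<longrightarrow> \<xi> c = \<eta> c" "cookie_hist x \<xi> n = h"
  shows "cookie_hist x \<eta> n = h"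
proof -
  have "cookie_hist x \<eta> n = cookie_hist x \<xi> n"
  proof (rule hist_dep)
    fix k assume k: "k < n"
    have "(cookie_walk x \<xi> k, count_list (cookie_hist x \<xi> k) (cookie_walk x \<xi> k)) \<noteq> ch h"
      using cnt_strict[OF k, of x \<xi>] assms(2)[symmetric] by (auto simp: ch_hist)
    then show "\<eta> (cookie_walk x \<xi> k, count_list (cookie_hist x \<xi> k) (cookie_walk x \<xi> k))
                         = \<xi> (cookie_walk x \<xi> k, count_list (cookie_hist x \<xi> k) (cookie_walk x \<xi> k))"
      using assms(1) by auto
  qed
  then show ?thesis using assms(2) by simp
qed

lemma sets_E[measurable]: "{\<xi>. cookie_hist x \<xi> n = h} \<in> sets (coin_space \<omega>)"
proof -
  have "{\<xi>. cookie_hist x \<xi> n = h} = (\<lambda>\<xi>. cookie_hist x \<xi> n) -` {h} \<inter> space (coin_space \<omega>)" by auto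
  also have "\<dots> \<in> sets (coin_space \<omega>)" by (rule measurable_sets[OF meas_hist]) simp
  finally show ?thesis .
qed

lemma sets_T[measurable]: "{\<xi>. \<xi> c} \<in> sets (coin_space \<omega>)" and sets_F[measurable]: "{\<xi>. \<not> \<xi> c} \<in> sets (coin_space \<omega>)"
proof -
  have "{\<xi>. \<xi> c} = (\<lambda>\<xi>. \<xi> c) -` {True} \<inter> space (coin_space \<omega>)" by auto
  also have "\<dots> \<in> sets (coin_space \<omega>)" by (rule measurable_sets[OF meas_coord]) simp
  finally show "{\<xi>. \<xi> c} \<in> sets (coin_space \<omega>)" .
  have "{\<xi>. \<not> \<xi> c} = (\<lambda>\<xi>. \<xi> c) -` {False} \<inter> space (coin_space \<omega>)" by auto
  also have "\<dots> \<in> sets (coin_space \<omega>)" by (rule measurable_sets[OF meas_coord]) simp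
  finally show "{\<xi>. \<not> \<xi> c} \<in> sets (coin_space \<omega>)" .
qed

definition pT :: "(int \<Rightarrow> nat \<Rightarrow> real) \<Rightarrow> int \<times> nat \<Rightarrow> real" where
  "pT \<omega> c = measure (coin_space \<omega>) {\<xi>. \<xi> c}"

lemma hist_in_H: "cookie_hist x \<xi> n \<in> {h. set h \<subseteq> {x - int n..x + int n} \<and> length h = Suc n}"
proof -
  have "\<bar>cookie_walk x \<xi> k - x\<bar> \<le> int k" for k
  proof (induction k)
    case 0 then show ?case by simp
  next
    case (Suc k) then show ?case using walk_step[of x \<xi> k] by linarith
  qed
  then have "cookie_walk x \<xi> k \<in> {x - int n..x + int n}" if "k \<le> n" for k
    using that by (smt (verit, best) atLeastAtMost_iff of_nat_mono)
  then show ?thesis by (auto simp: hist_map simp del: upt_Suc)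
qed

lemma finite_H: "finite {h. set h \<subseteq> {x - int n..x + int n} \<and> length h = Suc n}"
  by (rule finite_lists_length_eq) simp

definition Hs :: "int \<Rightarrow> nat \<Rightarrow> int list set" where
  "Hs x n = {h. set h \<subseteq> {x - int n..x + int n} \<and> length h = Suc n}"

lemma onestep:
  fixes g :: "int list \<Rightarrow> bool \<Rightarrow> real"
  shows "integrable (coin_space \<omega>) (\<lambda>\<xi>. g (cookie_hist x \<xi> n) (\<xi> (ch (cookie_hist x \<xi> n))))"
    and "(\<integral>\<xi>. g (cookie_hist x \<xi> n) (\<xi> (ch (cookie_hist x \<xi> n))) \<partial>coin_space \<omega>) =
       (\<Sum>h\<in>Hs x n. measure (coin_space \<omega>) {\<xi>. cookie_hist x \<xi> n = h} *
           (pT \<omega> (ch h) * g h True + (1 - pT \<omega> (ch h)) * g h False))"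
proof -
  define H where "H = Hs x n"

  interpret P: prob_space "coin_space \<omega>" by (rule coin_prob)
  let ?E = "\<lambda>h. {\<xi>. cookie_hist x \<xi> n = h}"
  let ?T = "\<lambda>h. {\<xi>. \<xi> (ch h)}"
  let ?F = "\<lambda>h. {\<xi>. \<not> \<xi> (ch h)}"
  have finH: "finite H" unfolding H_def Hs_def by (rule finite_H)
  have pw: "g (cookie_hist x \<xi> n) (\<xi> (ch (cookie_hist x \<xi> n))) =
     (\<Sum>h\<in>H. g h True * indicator (?E h \<inter> ?T h) \<xi> + g h False * indicator (?E h \<inter> ?F h) \<xi>)" for \<xi>
  proof -
    have "(\<Sum>h\<in>H. g h True * indicator (?E h \<inter> ?T h) \<xi> + g h False * indicator (?E h \<inter> ?F h) \<xi>)
        = (\<Sum>h\<in>H. if cookie_hist x \<xi> n = h then g h (\<xi> (ch h)) else 0)"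
      by (intro sum.cong) (auto simp: indicator_def)
    also have "\<dots> = g (cookie_hist x \<xi> n) (\<xi> (ch (cookie_hist x \<xi> n)))"
      using hist_in_H[of x \<xi> n] by (subst sum.delta'[OF finH]) (auto simp: H_def Hs_def)
    finally show ?thesis by simp
  qed
  have int1: "integrable (coin_space \<omega>) (\<lambda>\<xi>. g h True * indicator (?E h \<inter> ?T h) \<xi> + g h False * indicator (?E h \<inter> ?F h) \<xi>)" for h
    by (intro Bochner_Integration.integrable_add integrable_mult_right integrable_real_indicator) (auto simp: P.emeasure_finite less_top[symmetric])
  show "integrable (coin_space \<omega>) (\<lambda>\<xi>. g (cookie_hist x \<xi> n) (\<xi> (ch (cookie_hist x \<xi> n))))"
  proof -
    have eqf: "(\<lambda>\<xi>. g (cookie_hist x \<xi> n) (\<xi> (ch (cookie_hist x \<xi> n)))) =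
      (\<lambda>\<xi>. \<Sum>h\<in>H. g h True * indicator (?E h \<inter> ?T h) \<xi> + g h False * indicator (?E h \<inter> ?F h) \<xi>)"
      by (rule ext) (rule pw)
    show ?thesis unfolding eqf by (rule Bochner_Integration.integrable_sum) (rule int1)
  qed
  have mT: "measure (coin_space \<omega>) (?E h \<inter> ?T h) = measure (coin_space \<omega>) (?E h) * pT \<omega> (ch h)" for h
    unfolding pT_def
  proof (rule split_indep[where S="{ch h}"])
    fix \<xi> \<eta> assume "\<forall>c. c \<notin> {ch h} \<longrightarrow> \<xi> c = \<eta> c" "\<xi> \<in> ?E h"
    then show "\<eta> \<in> ?E h" using E_inv[of h \<xi> \<eta> x n] by simp
  qed simp_all
  have mF: "measure (coin_space \<omega>) (?E h \<inter> ?F h) = measure (coin_space \<omega>) (?E h) * (1 - pT \<omega> (ch h))" for h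
  proof -
    have "measure (coin_space \<omega>) (?E h \<inter> ?F h) = measure (coin_space \<omega>) (?E h) * measure (coin_space \<omega>) (?F h)"
    proof (rule split_indep[where S="{ch h}"])
      fix \<xi> \<eta> assume "\<forall>c. c \<notin> {ch h} \<longrightarrow> \<xi> c = \<eta> c" "\<xi> \<in> ?E h"
      then show "\<eta> \<in> ?E h" using E_inv[of h \<xi> \<eta> x n] by simp
    qed simp_all
    moreover have "?F h = space (coin_space \<omega>) - ?T h" by auto
    ultimately show ?thesis unfolding pT_def using P.prob_compl[of "?T h"] by simp
  qed
  have "(\<integral>\<xi>. g (cookie_hist x \<xi> n) (\<xi> (ch (cookie_hist x \<xi> n))) \<partial>coin_space \<omega>) =
     (\<Sum>h\<in>H. \<integral>\<xi>. g h True * indicator (?E h \<inter> ?T h) \<xi> + g h False * indicator (?E h \<inter> ?F h) \<xi> \<partial>coin_space \<omega>)"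
  proof -
    have eqf: "(\<lambda>\<xi>. g (cookie_hist x \<xi> n) (\<xi> (ch (cookie_hist x \<xi> n)))) =
      (\<lambda>\<xi>. \<Sum>h\<in>H. g h True * indicator (?E h \<inter> ?T h) \<xi> + g h False * indicator (?E h \<inter> ?F h) \<xi>)"
      by (rule ext) (rule pw)
    show ?thesis unfolding eqf by (rule Bochner_Integration.integral_sum) (rule int1)
  qed
  also have "\<dots> = (\<Sum>h\<in>H. g h True * measure (coin_space \<omega>) (?E h \<inter> ?T h) + g h False * measure (coin_space \<omega>) (?E h \<inter> ?F h))"
  proof (intro sum.cong refl)
    fix h
    show "(\<integral>\<xi>. g h True * indicator (?E h \<inter> ?T h) \<xi> + g h False * indicator (?E h \<inter> ?F h) \<xi> \<partial>coin_space \<omega>)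
       = g h True * measure (coin_space \<omega>) (?E h \<inter> ?T h) + g h False * measure (coin_space \<omega>) (?E h \<inter> ?F h)"
      by (subst Bochner_Integration.integral_add) (auto intro!: integrable_mult_right integrable_real_indicator simp: P.emeasure_finite less_top[symmetric])
  qed
  also have "\<dots> = (\<Sum>h\<in>H. measure (coin_space \<omega>) {\<xi>. cookie_hist x \<xi> n = h} *
           (pT \<omega> (ch h) * g h True + (1 - pT \<omega> (ch h)) * g h False))"
    by (intro sum.cong refl) (simp add: mT mF algebra_simps)
  finally show "(\<integral>\<xi>. g (cookie_hist x \<xi> n) (\<xi> (ch (cookie_hist x \<xi> n))) \<partial>coin_space \<omega>) =
       (\<Sum>h\<in>Hs x n. measure (coin_space \<omega>) {\<xi>. cookie_hist x \<xi> n = h} *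
           (pT \<omega> (ch h) * g h True + (1 - pT \<omega> (ch h)) * g h False))" unfolding H_def .
qed


lemma pT_eq: assumes "cookie_env_plus \<omega>" "snd c \<ge> 1"
  shows "pT \<omega> c = \<omega> (fst c) (snd c)" "1/2 \<le> pT \<omega> c" "pT \<omega> c \<le> 1"
proof -
  have b: "1/2 \<le> \<omega> (fst c) (snd c)" "\<omega> (fst c) (snd c) \<le> 1" using assms unfolding cookie_env_plus_def by auto
  have "emeasure (coin_space \<omega>) {\<xi>. \<forall>j\<in>{c}. \<xi> j \<in> {True}} = (\<Prod>j\<in>{c}. emeasure (Mc \<omega> j) {True})"
    by (rule emeasure_cyl) simp
  then have "emeasure (coin_space \<omega>) {\<xi>. \<xi> c} = emeasure (Mc \<omega> c) {True}" by simp
  also have "\<dots> = ennreal (\<omega> (fst c) (snd c))"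
    using b by (simp add: Mc_def emeasure_pmf_single)
  finally show "pT \<omega> c = \<omega> (fst c) (snd c)" unfolding pT_def measure_def using b by simp
  then show "1/2 \<le> pT \<omega> c" "pT \<omega> c \<le> 1" using b by simp_all
qed

definition yL :: "int \<Rightarrow> int list \<Rightarrow> real" where
  "yL L h = real_of_int (if L \<in> set h then L else last h)"

lemma below_L: "x < L \<Longrightarrow> L \<notin> set (cookie_hist x \<xi> n) \<Longrightarrow> cookie_walk x \<xi> n < L"
proof (induction n)
  case 0 then show ?case by simp
next
  case (Suc n)
  then have "L \<notin> set (cookie_hist x \<xi> n)" "cookie_walk x \<xi> (Suc n) \<noteq> L" by (auto simp: hist_Suc)
  then show ?case using Suc walk_le_Suc[of x \<xi> n] by auto
qed

lemma yL_le: "0 < L \<Longrightarrow> yL L (cookie_hist 0 \<xi> n) \<le> L"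
  using below_L[of 0 L \<xi> n] by (auto simp: yL_def cookie_walk_def)

lemma sub_step: assumes env: "cookie_env_plus \<omega>" and L: "L > 0"
  shows "(\<integral>\<xi>. yL L (cookie_hist 0 \<xi> n) \<partial>coin_space \<omega>) \<le> (\<integral>\<xi>. yL L (cookie_hist 0 \<xi> (Suc n)) \<partial>coin_space \<omega>)"
proof -
  let ?g = "\<lambda>h b. yL L (h @ [if b then last h + 1 else last h - 1])"
  let ?gz = "\<lambda>(h::int list) (b::bool). yL L h"
  have e1: "(\<lambda>\<xi>. yL L (cookie_hist 0 \<xi> (Suc n))) = (\<lambda>\<xi>. ?g (cookie_hist 0 \<xi> n) (\<xi> (ch (cookie_hist 0 \<xi> n))))"
    by (rule ext) (simp only: cookie_hist.simps(2) Let_def ch_def)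
  have e0: "(\<lambda>\<xi>. yL L (cookie_hist 0 \<xi> n)) = (\<lambda>\<xi>. ?gz (cookie_hist 0 \<xi> n) (\<xi> (ch (cookie_hist 0 \<xi> n))))"
    by simp
  have "(\<Sum>h\<in>Hs 0 n. measure (coin_space \<omega>) {\<xi>. cookie_hist 0 \<xi> n = h} * (pT \<omega> (ch h) * ?gz h True + (1 - pT \<omega> (ch h)) * ?gz h False))
     \<le> (\<Sum>h\<in>Hs 0 n. measure (coin_space \<omega>) {\<xi>. cookie_hist 0 \<xi> n = h} * (pT \<omega> (ch h) * ?g h True + (1 - pT \<omega> (ch h)) * ?g h False))"
  proof (rule sum_mono)
    fix h assume h: "h \<in> Hs 0 n"
    then have hne: "h \<noteq> []" by (auto simp: Hs_def)
    then have "last h \<in> set h" by simp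
    then have "count_list h (last h) \<ge> 1" using count_list_0_iff[of h "last h"] by linarith
    then have p: "1/2 \<le> pT \<omega> (ch h)" "pT \<omega> (ch h) \<le> 1" using pT_eq[OF env, of "ch h"] by (auto simp: ch_def)
    have "pT \<omega> (ch h) * ?gz h True + (1 - pT \<omega> (ch h)) * ?gz h False \<le> pT \<omega> (ch h) * ?g h True + (1 - pT \<omega> (ch h)) * ?g h False"
    proof (cases "L \<in> set h")
      case True then show ?thesis by (simp add: yL_def algebra_simps)
    next
      case False
      have a: "?g h True = real_of_int (last h) + 1" "?g h False = real_of_int (last h) - 1" "?gz h True = real_of_int (last h)"
        using False by (auto simp: yL_def)
      show ?thesis unfolding a using p by (simp add: algebra_simps)
    qed
    then show "measure (coin_space \<omega>) {\<xi>. cookie_hist 0 \<xi> n = h} * (pT \<omega> (ch h) * ?gz h True + (1 - pT \<omega> (ch h)) * ?gz h False)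
     \<le> measure (coin_space \<omega>) {\<xi>. cookie_hist 0 \<xi> n = h} * (pT \<omega> (ch h) * ?g h True + (1 - pT \<omega> (ch h)) * ?g h False)"
      by (intro mult_left_mono) simp_all
  qed
  moreover have "(\<integral>\<xi>. yL L (cookie_hist 0 \<xi> (Suc n)) \<partial>coin_space \<omega>) = (\<Sum>h\<in>Hs 0 n. measure (coin_space \<omega>) {\<xi>. cookie_hist 0 \<xi> n = h} * (pT \<omega> (ch h) * ?g h True + (1 - pT \<omega> (ch h)) * ?g h False))"
    unfolding e1 by (rule onestep(2))
  moreover have "(\<integral>\<xi>. yL L (cookie_hist 0 \<xi> n) \<partial>coin_space \<omega>) = (\<Sum>h\<in>Hs 0 n. measure (coin_space \<omega>) {\<xi>. cookie_hist 0 \<xi> n = h} * (pT \<omega> (ch h) * ?gz h True + (1 - pT \<omega> (ch h)) * ?gz h False))"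
    by (subst e0) (rule onestep(2))
  ultimately show ?thesis by simp
qed

lemma sub_mart: assumes env: "cookie_env_plus \<omega>" and L: "L > 0"
  shows "0 \<le> (\<integral>\<xi>. yL L (cookie_hist 0 \<xi> n) \<partial>coin_space \<omega>)"
proof (induction n)
  case 0
  interpret P: prob_space "coin_space \<omega>" by (rule coin_prob)
  have "yL L [0] = 0" using L by (simp add: yL_def)
  then show ?case by simp
next
  case (Suc n) then show ?case using sub_step[OF env L, of n] by linarith
qed

lemma yL_integrable: "integrable (coin_space \<omega>) (\<lambda>\<xi>. yL L (cookie_hist 0 \<xi> n))"
proof -
  have e0: "(\<lambda>\<xi>. yL L (cookie_hist 0 \<xi> n)) = (\<lambda>\<xi>. (\<lambda>h (b::bool). yL L h) (cookie_hist 0 \<xi> n) (\<xi> (ch (cookie_hist 0 \<xi> n))))"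
    by simp
  show ?thesis using onestep(1)[where g="\<lambda>h (b::bool). yL L h" and x=0 and n=n and \<omega>=\<omega>] by simp
qed

lemma ruin_bound: assumes env: "cookie_env_plus \<omega>" and L: "L > 0" and K: "K > 0"
  shows "measure (coin_space \<omega>) {\<xi>. yL L (cookie_hist 0 \<xi> n) \<le> - K} \<le> L / (L + K)"
proof -
  interpret P: prob_space "coin_space \<omega>" by (rule coin_prob)
  let ?A = "{\<xi>. yL L (cookie_hist 0 \<xi> n) \<le> - K}"
  have A: "?A \<in> sets (coin_space \<omega>)"
  proof -
    have "?A = (\<lambda>\<xi>. cookie_hist 0 \<xi> n) -` {h. yL L h \<le> - K} \<inter> space (coin_space \<omega>)" by auto
    also have "\<dots> \<in> sets (coin_space \<omega>)" by (rule measurable_sets[OF meas_hist]) simp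
    finally show ?thesis .
  qed
  have pw: "yL L (cookie_hist 0 \<xi> n) \<le> L - (L + K) * indicator ?A \<xi>" for \<xi>
    using yL_le[OF L, of \<xi> n] by (auto simp: indicator_def)
  have iA: "integrable (coin_space \<omega>) (indicator ?A :: _ \<Rightarrow> real)"
    by (rule integrable_real_indicator[OF A]) (simp add: P.emeasure_finite less_top[symmetric])
  have i2: "integrable (coin_space \<omega>) (\<lambda>\<xi>. (L + K) * indicator ?A \<xi>)"
    using iA by (rule integrable_mult_right)
  have i3: "integrable (coin_space \<omega>) (\<lambda>\<xi>. real_of_int L - (L + K) * indicator ?A \<xi>)"
    by (rule Bochner_Integration.integrable_diff[OF _ i2]) simp
  have sp: "measure (coin_space \<omega>) UNIV = 1" using P.prob_space by simp
  have "0 \<le> (\<integral>\<xi>. yL L (cookie_hist 0 \<xi> n) \<partial>coin_space \<omega>)" by (rule sub_mart[OF env L])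
  also have "\<dots> \<le> (\<integral>\<xi>. L - (L + K) * indicator ?A \<xi> \<partial>coin_space \<omega>)"
    by (rule integral_mono[OF yL_integrable i3 pw])
  also have "\<dots> = L - (L + K) * measure (coin_space \<omega>) ?A"
  proof -
    have "(\<integral>\<xi>. L - (L + K) * indicator ?A \<xi> \<partial>coin_space \<omega>) = (\<integral>\<xi>. L \<partial>coin_space \<omega>) - (\<integral>\<xi>. (L + K) * indicator ?A \<xi> \<partial>coin_space \<omega>)"
      by (rule Bochner_Integration.integral_diff[OF _ i2]) simp
    also have "\<dots> = L - (L + K) * measure (coin_space \<omega>) ?A"
      using A sp by simp
    finally show ?thesis .
  qed
  finally have "(L + K) * measure (coin_space \<omega>) ?A \<le> L" by simp
  then show ?thesis using L K by (simp add: field_simps)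
qed


lemma T_bound: assumes env: "cookie_env_plus \<omega>" and L: "L > 0" and K: "K > 0"
  shows "measure (coin_space \<omega>) {\<xi>. (\<forall>k. cookie_walk 0 \<xi> k < L) \<and> (\<exists>N. \<forall>m\<ge>N. cookie_walk 0 \<xi> m \<le> - K)}
     \<le> real_of_int L / (real_of_int L + real_of_int K)"
proof -
  interpret P: prob_space "coin_space \<omega>" by (rule coin_prob)
  define D where "D n = {\<xi>. (\<forall>k. cookie_walk 0 \<xi> k < L) \<and> (\<forall>m\<ge>n. cookie_walk 0 \<xi> m \<le> - K)}" for n
  have Dm: "D n \<in> sets (coin_space \<omega>)" for n
  proof -
    have "D n = {\<xi> \<in> space (coin_space \<omega>). (\<forall>k. cookie_walk 0 \<xi> k < L) \<and> (\<forall>m\<ge>n. cookie_walk 0 \<xi> m \<le> - K)}"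
      by (simp add: D_def)
    also have "\<dots> \<in> sets (coin_space \<omega>)" by measurable
    finally show ?thesis .
  qed
  have inc: "incseq D" unfolding D_def incseq_def by auto
  have Db: "measure (coin_space \<omega>) (D n) \<le> L / (L + K)" for n
  proof -
    have sub: "D n \<subseteq> {\<xi>. yL L (cookie_hist 0 \<xi> n) \<le> - K}"
    proof
      fix \<xi> assume "\<xi> \<in> D n"
      then have a: "\<forall>k. cookie_walk 0 \<xi> k < L" "cookie_walk 0 \<xi> n \<le> - K" by (auto simp: D_def)
      have "L \<notin> set (cookie_hist 0 \<xi> n)" using a(1) by (auto simp: hist_map simp del: upt_Suc)
      then have "yL L (cookie_hist 0 \<xi> n) = cookie_walk 0 \<xi> n" by (simp add: yL_def cookie_walk_def)
      then show "\<xi> \<in> {\<xi>. yL L (cookie_hist 0 \<xi> n) \<le> - K}" using a(2) by simp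
    qed
    have A: "{\<xi>. yL L (cookie_hist 0 \<xi> n) \<le> - K} \<in> sets (coin_space \<omega>)"
    proof -
      have "{\<xi>. yL L (cookie_hist 0 \<xi> n) \<le> - K} = (\<lambda>\<xi>. cookie_hist 0 \<xi> n) -` {h. yL L h \<le> - K} \<inter> space (coin_space \<omega>)" by auto
      also have "\<dots> \<in> sets (coin_space \<omega>)" by (rule measurable_sets[OF meas_hist]) simp
      finally show ?thesis .
    qed
    have "measure (coin_space \<omega>) (D n) \<le> measure (coin_space \<omega>) {\<xi>. yL L (cookie_hist 0 \<xi> n) \<le> - K}"
      using sub A by (intro P.finite_measure_mono) auto
    also have "\<dots> \<le> L / (L + K)" using ruin_bound[OF env L, of "real_of_int K" n] K by simp
    finally show ?thesis .
  qed
  have lim: "(\<lambda>n. measure (coin_space \<omega>) (D n)) \<longlonglongrightarrow> measure (coin_space \<omega>) (\<Union>n. D n)"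
    using Dm inc by (intro P.finite_Lim_measure_incseq) auto
  have "measure (coin_space \<omega>) (\<Union>n. D n) \<le> L / (L + K)"
    using lim Db by (intro LIMSEQ_le_const2[OF lim]) auto
  moreover have "(\<Union>n. D n) = {\<xi>. (\<forall>k. cookie_walk 0 \<xi> k < L) \<and> (\<exists>N. \<forall>m\<ge>N. cookie_walk 0 \<xi> m \<le> - K)}"
    by (auto simp: D_def)
  ultimately show ?thesis by simp
qed

lemma MI_AE: assumes env: "cookie_env_plus \<omega>"
  shows "AE \<xi> in coin_space \<omega>. \<not> (\<forall>K::nat. \<exists>N. \<forall>m\<ge>N. cookie_walk 0 \<xi> m \<le> - int K)"
proof -
  interpret P: prob_space "coin_space \<omega>" by (rule coin_prob)
  define TL where "TL l = {\<xi>. (\<forall>k. cookie_walk 0 \<xi> k < int l + 1) \<and> (\<forall>K::nat. \<exists>N. \<forall>m\<ge>N. cookie_walk 0 \<xi> m \<le> - int K)}" for l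
  have TLm: "TL l \<in> sets (coin_space \<omega>)" for l
  proof -
    have "TL l = {\<xi> \<in> space (coin_space \<omega>). (\<forall>k. cookie_walk 0 \<xi> k < int l + 1) \<and> (\<forall>K::nat. \<exists>N. \<forall>m\<ge>N. cookie_walk 0 \<xi> m \<le> - int K)}"
      by (simp add: TL_def)
    also have "\<dots> \<in> sets (coin_space \<omega>)" by measurable
    finally show ?thesis .
  qed
  have TL0: "measure (coin_space \<omega>) (TL l) = 0" for l
  proof (rule ccontr)
    let ?L = "int l + 1"
    assume "measure (coin_space \<omega>) (TL l) \<noteq> 0"
    then have a: "measure (coin_space \<omega>) (TL l) > 0" using measure_nonneg[of "coin_space \<omega>" "TL l"] by linarith
    obtain K :: nat where K: "real_of_int ?L / measure (coin_space \<omega>) (TL l) < K" using reals_Archimedean2 by blast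
    have "real_of_int ?L / measure (coin_space \<omega>) (TL l) > 0" using a by simp
    then have "real K > 0" using K by linarith
    then have Kpos: "K > 0" by simp
    have "TL l \<subseteq> {\<xi>. (\<forall>k. cookie_walk 0 \<xi> k < ?L) \<and> (\<exists>N. \<forall>m\<ge>N. cookie_walk 0 \<xi> m \<le> - int K)}"
      by (auto simp: TL_def)
    then have "measure (coin_space \<omega>) (TL l) \<le> measure (coin_space \<omega>) {\<xi>. (\<forall>k. cookie_walk 0 \<xi> k < ?L) \<and> (\<exists>N. \<forall>m\<ge>N. cookie_walk 0 \<xi> m \<le> - int K)}"
    proof (intro P.finite_measure_mono)
      have "{\<xi>. (\<forall>k. cookie_walk 0 \<xi> k < ?L) \<and> (\<exists>N. \<forall>m\<ge>N. cookie_walk 0 \<xi> m \<le> - int K)} =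
        {\<xi> \<in> space (coin_space \<omega>). (\<forall>k. cookie_walk 0 \<xi> k < ?L) \<and> (\<exists>N. \<forall>m\<ge>N. cookie_walk 0 \<xi> m \<le> - int K)}" by simp
      also have "\<dots> \<in> sets (coin_space \<omega>)" by measurable
      finally show "{\<xi>. (\<forall>k. cookie_walk 0 \<xi> k < ?L) \<and> (\<exists>N. \<forall>m\<ge>N. cookie_walk 0 \<xi> m \<le> - int K)} \<in> sets (coin_space \<omega>)" .
    qed
    also have "\<dots> \<le> real_of_int ?L / (real_of_int ?L + real_of_int (int K))"
      using T_bound[OF env, of ?L "int K"] Kpos by simp
    also have "\<dots> < measure (coin_space \<omega>) (TL l)"
    proof -
      have "real_of_int ?L < measure (coin_space \<omega>) (TL l) * K" using K a by (simp add: field_simps)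
      also have "\<dots> \<le> measure (coin_space \<omega>) (TL l) * (real_of_int ?L + K)" using a by (intro mult_left_mono) auto
      finally show ?thesis by (simp add: field_simps)
    qed
    finally show False by simp
  qed
  have "AE \<xi> in coin_space \<omega>. \<xi> \<notin> TL l" for l using TL0[of l] P.prob_eq_0[OF TLm[of l]] by simp
  then have "AE \<xi> in coin_space \<omega>. \<forall>l. \<xi> \<notin> TL l" by (simp add: AE_all_countable)
  then show ?thesis
  proof (rule eventually_mono)
    fix \<xi> assume nt: "\<forall>l. \<xi> \<notin> TL l"
    show "\<not> (\<forall>K::nat. \<exists>N. \<forall>m\<ge>N. cookie_walk 0 \<xi> m \<le> - int K)"
    proof
      assume MI: "\<forall>K::nat. \<exists>N. \<forall>m\<ge>N. cookie_walk 0 \<xi> m \<le> - int K"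
      then obtain N where N0: "\<forall>m\<ge>N. cookie_walk 0 \<xi> m \<le> - int 1" by blast
      then have N: "\<forall>m\<ge>N. cookie_walk 0 \<xi> m \<le> - 1" by simp
      define B where "B = Max ((\<lambda>k. cookie_walk 0 \<xi> k) ` {..N})"
      have "cookie_walk 0 \<xi> k < int (nat (max B 0)) + 1" for k
      proof (cases "k \<le> N")
        case True
        then have "cookie_walk 0 \<xi> k \<le> B" unfolding B_def by (intro Max_ge) auto
        then show ?thesis by linarith
      next
        case False
        then have "cookie_walk 0 \<xi> k \<le> - 1" using N by simp
        then show ?thesis by linarith
      qed
      then have "\<xi> \<in> TL (nat (max B 0))" using MI by (simp add: TL_def)
      then show False using nt by blast
    qed
  qed
qed

lemma measure_cyl: "finite J \<Longrightarrow>
  measure (coin_space \<omega>) {\<xi>. \<forall>j\<in>J. \<xi> j \<in> F j} = (\<Prod>j\<in>J. measure (Mc \<omega> j) (F j))"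
  using product_prob_space.measure_PiM_emb[OF pps, of J UNIV F \<omega>] by (simp add: coin_space_Mc cyl_eq)

lemma Good_AE: assumes env: "cookie_env_plus \<omega>"
  shows "AE \<xi> in coin_space \<omega>. \<forall>z i0. \<exists>i\<ge>i0. \<xi> (z,i)"
proof -
  interpret P: prob_space "coin_space \<omega>" by (rule coin_prob)
  have null: "measure (coin_space \<omega>) {\<xi>. \<forall>i\<ge>i0. \<not> \<xi> (z,i)} = 0" for z i0
  proof (rule ccontr)
    let ?a = "max 1 i0"
    assume "measure (coin_space \<omega>) {\<xi>. \<forall>i\<ge>i0. \<not> \<xi> (z,i)} \<noteq> 0"
    then have pos: "measure (coin_space \<omega>) {\<xi>. \<forall>i\<ge>i0. \<not> \<xi> (z,i)} > 0" using measure_nonneg by (simp add: order_less_le)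
    obtain m where m: "(1/2::real) ^ m < measure (coin_space \<omega>) {\<xi>. \<forall>i\<ge>i0. \<not> \<xi> (z,i)}"
      using real_arch_pow_inv[OF pos, of "1/2"] by auto
    define J where "J = {z} \<times> {?a..<?a+m}"
    have finJ: "finite J" by (simp add: J_def)
    have sub: "{\<xi>. \<forall>i\<ge>i0. \<not> \<xi> (z,i)} \<subseteq> {\<xi>. \<forall>j\<in>J. \<xi> j \<in> {False}}" unfolding J_def by auto
    have "measure (coin_space \<omega>) {\<xi>. \<forall>i\<ge>i0. \<not> \<xi> (z,i)} \<le> measure (coin_space \<omega>) {\<xi>. \<forall>j\<in>J. \<xi> j \<in> {False}}"
      by (rule P.finite_measure_mono[OF sub sets_cyl[OF finJ]])
    also have "\<dots> = (\<Prod>j\<in>J. measure (Mc \<omega> j) {False})" using finJ by (rule measure_cyl)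
    also have "\<dots> \<le> (\<Prod>j\<in>J. 1/2)"
    proof (rule prod_mono)
      fix j assume "j \<in> J"
      then have j: "snd j \<ge> 1" unfolding J_def by auto
      then have b: "1/2 \<le> \<omega> (fst j) (snd j)" "\<omega> (fst j) (snd j) \<le> 1" using env unfolding cookie_env_plus_def by auto
      have "measure (Mc \<omega> j) {False} = pmf (bernoulli_pmf (\<omega> (fst j) (snd j))) False"
        unfolding Mc_def by (rule measure_pmf_single)
      also have "\<dots> = 1 - \<omega> (fst j) (snd j)" using b by (simp add: pmf_bernoulli_False)
      finally have "measure (Mc \<omega> j) {False} = 1 - \<omega> (fst j) (snd j)" .
      then show "0 \<le> measure (Mc \<omega> j) {False} \<and> measure (Mc \<omega> j) {False} \<le> 1/2" using b by simp
    qed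
    also have "\<dots> = (1/2) ^ card J" by (rule prod_constant)
    also have "card J = m" unfolding J_def by (simp add: card_cartesian_product)
    finally show False using m by simp
  qed
  have "AE \<xi> in coin_space \<omega>. \<xi> \<notin> {\<xi>. \<forall>i\<ge>i0. \<not> \<xi> (z,i)}" for z i0
  proof -
    have "{\<xi>. \<forall>i\<ge>i0. \<not> \<xi> (z,i)} = {\<xi> \<in> space (coin_space \<omega>). \<forall>i\<ge>i0. \<not> \<xi> (z,i)}" by simp
    also have "\<dots> \<in> sets (coin_space \<omega>)" by measurable
    finally show ?thesis using null[of i0 z] P.prob_eq_0 by blast
  qed
  then have "AE \<xi> in coin_space \<omega>. \<forall>z i0. \<xi> \<notin> {\<xi>. \<forall>i\<ge>i0. \<not> \<xi> (z,i)}" by (simp add: AE_all_countable)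
  then show ?thesis by (rule eventually_mono) auto
qed


lemma setT_meas: "setT S \<in> measurable (coin_space \<omega>) (coin_space \<omega>)"
proof -
  have e: "setT S = (\<lambda>\<xi>. mix S (\<xi>, \<lambda>_. True))" by (auto simp: fun_eq_iff setT_def mix_def)
  have "(\<lambda>\<xi>. (\<xi>, \<lambda>_. True)) \<in> measurable (coin_space \<omega>) (coin_space \<omega> \<Otimes>\<^sub>M coin_space \<omega>)"
    by (intro measurable_Pair measurable_ident_sets measurable_const) auto
  then show ?thesis unfolding e by (rule measurable_compose[OF _ meas_mix])
qed

lemma pathwise_final:
  assumes nR: "finite {n. cookie_walk 0 \<xi> n = 0}" and G: "\<forall>z i0. \<exists>i\<ge>i0. \<xi> (z,i)"
    and nMI: "\<not> (\<forall>K::nat. \<exists>N. \<forall>m\<ge>N. cookie_walk 0 \<xi> m \<le> - int K)"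
  shows "\<exists>N. \<forall>n>0. cookie_walk 0 (setT (SN N) \<xi>) n > 0"
proof -
  obtain t where t: "cookie_walk 0 \<xi> t = 0" and tt: "(\<forall>n>t. cookie_walk 0 \<xi> n > 0) \<or> (\<forall>n>t. cookie_walk 0 \<xi> n < 0)"
    using last_zero[OF nR] by blast
  show ?thesis
  proof (cases "\<forall>n>t. cookie_walk 0 \<xi> n > 0")
    case True
    then show ?thesis using sim_main[of \<xi> t] t by blast
  next
    case False
    then have neg: "\<forall>n>t. cookie_walk 0 \<xi> n < 0" using tt by blast
    have fin: "\<forall>z\<le>0. finite {n. cookie_walk 0 \<xi> n = z}"
    proof (intro allI impI)
      fix z :: int assume "z \<le> 0"
      then have z: "z = - int (nat (- z))" by simp
      show "finite {n. cookie_walk 0 \<xi> n = z}"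
      proof (rule ccontr)
        assume "infinite {n. cookie_walk 0 \<xi> n = z}"
        then have "infinite {n. cookie_walk 0 \<xi> n = - int (nat (- z))}" using z by simp
        then have "infinite {n. cookie_walk 0 \<xi> n = 0}" using up_to_zero G by blast
        then show False using nR by simp
      qed
    qed
    have "\<forall>K::nat. \<exists>N. \<forall>m\<ge>N. cookie_walk 0 \<xi> m \<le> - int K"
      using to_minus_inf[OF neg fin] by blast
    then show ?thesis using nMI by blast
  qed
qed

lemma main_coin: assumes env: "cookie_env_plus \<omega>"
  and R0: "measure (coin_space \<omega>) {\<xi>. infinite {n. cookie_walk 0 \<xi> n = 0}} = 0"
  shows "measure (coin_space \<omega>) {\<xi>. \<forall>n>0. cookie_walk 0 \<xi> n > 0} > 0"
proof -
  interpret P: prob_space "coin_space \<omega>" by (rule coin_prob)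
  let ?A = "{\<xi>. \<forall>n>0. cookie_walk 0 \<xi> n > 0}"
  have Am: "?A \<in> sets (coin_space \<omega>)"
  proof -
    have "?A = {\<xi> \<in> space (coin_space \<omega>). \<forall>n>0. cookie_walk 0 \<xi> n > 0}" by simp
    also have "\<dots> \<in> sets (coin_space \<omega>)" by measurable
    finally show ?thesis .
  qed
  define Bm where "Bm N = {\<xi>. setT (SN N) \<xi> \<in> ?A}" for N
  have Bmm: "Bm N \<in> sets (coin_space \<omega>)" for N
  proof -
    have "Bm N = setT (SN N) -` ?A \<inter> space (coin_space \<omega>)" by (auto simp: Bm_def)
    also have "\<dots> \<in> sets (coin_space \<omega>)" by (rule measurable_sets[OF setT_meas Am])
    finally show ?thesis .
  qed
  have Rm: "{\<xi>. infinite {n. cookie_walk 0 \<xi> n = 0}} \<in> sets (coin_space \<omega>)"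
  proof -
    have "{\<xi>. infinite {n. cookie_walk 0 \<xi> n = 0}} = {\<xi> \<in> space (coin_space \<omega>). \<forall>m. \<exists>n>m. cookie_walk 0 \<xi> n = 0}"
      by (simp add: infinite_nat_iff_unbounded)
    also have "\<dots> \<in> sets (coin_space \<omega>)" by measurable
    finally show ?thesis .
  qed
  have AER: "AE \<xi> in coin_space \<omega>. \<xi> \<notin> {\<xi>. infinite {n. cookie_walk 0 \<xi> n = 0}}"
    using P.prob_eq_0[OF Rm] R0 by simp
  have AEB: "AE \<xi> in coin_space \<omega>. \<exists>N. \<xi> \<in> Bm N"
    using AER Good_AE[OF env] MI_AE[OF env]
  proof eventually_elim
    case (elim \<xi>)
    then show ?case using pathwise_final[of \<xi>] by (auto simp: Bm_def)
  qed
  have "\<exists>N. measure (coin_space \<omega>) (Bm N) \<noteq> 0"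
  proof (rule ccontr)
    assume "\<not> (\<exists>N. measure (coin_space \<omega>) (Bm N) \<noteq> 0)"
    then have "AE \<xi> in coin_space \<omega>. \<xi> \<notin> Bm N" for N using P.prob_eq_0[OF Bmm[of N]] by simp
    then have "AE \<xi> in coin_space \<omega>. \<forall>N. \<xi> \<notin> Bm N" by (simp add: AE_all_countable)
    with AEB have "AE \<xi> in coin_space \<omega>. False" by eventually_elim auto
    then show False using P.AE_False by simp
  qed
  then obtain N where "measure (coin_space \<omega>) (Bm N) \<noteq> 0" by blast
  then have Bpos: "measure (coin_space \<omega>) (Bm N) > 0" using measure_nonneg[of "coin_space \<omega>" "Bm N"] by linarith
  let ?C = "{\<xi>. \<forall>j\<in>SN N. \<xi> j \<in> {True}}"
  have finS: "finite (SN N)" by (simp add: SN_def)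
  have Cm: "?C \<in> sets (coin_space \<omega>)" by (rule sets_cyl[OF finS])
  have "measure (coin_space \<omega>) ?C = (\<Prod>j\<in>SN N. measure (Mc \<omega> j) {True})" by (rule measure_cyl[OF finS])
  also have "\<dots> > 0"
  proof (rule prod_pos)
    fix j assume "j \<in> SN N"
    then have j: "snd j \<ge> 1" by (auto simp: SN_def)
    then have b: "1/2 \<le> \<omega> (fst j) (snd j)" "\<omega> (fst j) (snd j) \<le> 1" using env unfolding cookie_env_plus_def by auto
    have "measure (Mc \<omega> j) {True} = pmf (bernoulli_pmf (\<omega> (fst j) (snd j))) True"
      unfolding Mc_def by (rule measure_pmf_single)
    also have "\<dots> = \<omega> (fst j) (snd j)" using b by (simp add: pmf_bernoulli_True)
    finally show "0 < measure (Mc \<omega> j) {True}" using b by simp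
  qed
  finally have Cpos: "measure (coin_space \<omega>) ?C > 0" .
  have ind: "measure (coin_space \<omega>) (Bm N \<inter> ?C) = measure (coin_space \<omega>) (Bm N) * measure (coin_space \<omega>) ?C"
  proof (rule split_indep[OF Bmm Cm, where S="SN N"])
    fix \<xi> \<eta> assume a: "\<forall>c. c \<notin> SN N \<longrightarrow> \<xi> c = \<eta> c" "\<xi> \<in> Bm N"
    have "setT (SN N) \<eta> = setT (SN N) \<xi>" using a(1) by (auto simp: setT_def fun_eq_iff)
    then show "\<eta> \<in> Bm N" using a(2) by (simp add: Bm_def)
  next
    fix \<xi> \<eta> assume a: "\<forall>c. c \<in> SN N \<longrightarrow> \<xi> c = \<eta> c" "\<xi> \<in> ?C"
    then show "\<eta> \<in> ?C" by auto
  qed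
  have sub: "Bm N \<inter> ?C \<subseteq> ?A"
  proof
    fix \<xi> assume a: "\<xi> \<in> Bm N \<inter> ?C"
    then have "setT (SN N) \<xi> = \<xi>" by (auto simp: setT_def fun_eq_iff)
    then show "\<xi> \<in> ?A" using a by (simp add: Bm_def)
  qed
  have "0 < measure (coin_space \<omega>) (Bm N \<inter> ?C)" using ind Bpos Cpos by simp
  also have "\<dots> \<le> measure (coin_space \<omega>) ?A" by (rule P.finite_measure_mono[OF sub Am])
  finally show ?thesis .
qed

theorem mainTheorem8:
  fixes \<omega> :: "int \<Rightarrow> nat \<Rightarrow> real"
  assumes "cookie_env_plus \<omega>"
    and "omega_transient \<omega> 0"
  shows "measure (cookie_law \<omega> 0) {X. \<forall>n>0. X n > 0} > 0"
proof -
  have sp: "space (PiM UNIV (\<lambda>_::nat. count_space (UNIV::int set))) = UNIV" by (simp add: space_PiM)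
  have Ap: "{X. \<forall>n>0. X n > (0::int)} \<in> sets (PiM UNIV (\<lambda>_::nat. count_space (UNIV::int set)))"
  proof -
    have "{X. \<forall>n>0. X n > (0::int)} = {X \<in> space (PiM UNIV (\<lambda>_::nat. count_space (UNIV::int set))). \<forall>n>0. X n > 0}"
      using sp by simp
    also have "\<dots> \<in> sets (PiM UNIV (\<lambda>_::nat. count_space (UNIV::int set)))" by measurable
    finally show ?thesis .
  qed
  have Rp: "R_event 0 \<in> sets (PiM UNIV (\<lambda>_::nat. count_space (UNIV::int set)))"
  proof -
    have "R_event 0 = {X \<in> space (PiM UNIV (\<lambda>_::nat. count_space (UNIV::int set))). \<forall>m. \<exists>n>m. X n = 0}"
      using sp by (simp add: R_event_def infinite_nat_iff_unbounded)
    also have "\<dots> \<in> sets (PiM UNIV (\<lambda>_::nat. count_space (UNIV::int set)))" by measurable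
    finally show ?thesis .
  qed
  have "measure (cookie_law \<omega> 0) (R_event 0) = 0" using assms(2) by (simp add: omega_transient_def)
  then have R0: "measure (coin_space \<omega>) {\<xi>. infinite {n. cookie_walk 0 \<xi> n = 0}} = 0"
    using law_eq[OF Rp, of \<omega> 0] by (simp add: R_event_def)
  have "measure (cookie_law \<omega> 0) {X. \<forall>n>0. X n > 0} = measure (coin_space \<omega>) {\<xi>. \<forall>n>0. cookie_walk 0 \<xi> n > 0}"
    using law_eq[OF Ap, of \<omega> 0] by simp
  also have "\<dots> > 0" by (rule main_coin[OF assms(1) R0])
  finally show ?thesis .
qed

end
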